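(* Assume $2J_1>3\theta^*\pi^*(f)$. Then there exist constants $\varepsilon,\eta,K>0$ such that for all $s>0$ and all integers $i,\delta_1,\delta_2\ge0$, $T\ge1$ with $i\le\delta_1$, $\delta_2\ge\delta_1-i$, $i+T\ge\delta_1+1$, writing $\varepsilon_1=\varepsilon_{(0,0),\delta_1}$ and $\varepsilon_2=\varepsilon_{(i,i+T),\delta_2}$, $$\mathbb P\big(\delta_1\varepsilon_1(f)>s,\ d(\varepsilon_1,\hat\pi)<\eta,\ \delta_2\varepsilon_2(f)>s,\ d(\varepsilon_2,\hat\pi)<\eta\big)\le K\exp(-(3\theta^*/2+\varepsilon)s).$$
   Context: Let $E$ be a finite set and $P,Q$ irreducible aperiodic stochastic $E\times E$ matrices with invariant probability vectors $\pi_P,\pi_Q$; $\pi=\pi_P\otimes\pi_Q$. Under $\mathbb P$, $(X_n)_{n\ge0}$, $(Y_n)_{n\ge0}$ are independent stationary Markov chains with transition matrices $P,Q$. Let $f:E\times E\to\mathbb Z$ with gcd of its values equal to $1$, $\nu(f)=\sum f\,d\nu$, and assume $\pi(f)<0$ and (C1): for some $n\ge1$ there are cycles $x_1,\dots,x_n$ w.r.t. $P$ and $y_1,\dots,y_n$ w.r.t. $Q$ (i.e. $P(x_k,x_{k+1})>0$, $Q(y_k,y_{k+1})>0$ for all $k$, indices mod $n$) with $\sum_kf(x_k,y_k)>0$. Let $\Phi(\theta)_{(x,y),(x',y')}=e^{\theta f(x',y')}P_{x,x'}Q_{y,y'}$, $\varphi(\theta)$ its spectral radius, $\theta^*>0$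 the unique positive solution of $\varphi(\theta)=1$, $r^*$ a positive right eigenvector of $\Phi(\theta^* )$ for eigenvalue 1, $R^*_{(x,y),(x',y')}=\frac{r^*(x',y')}{r^*(x,y)}\Phi(\theta^* )_{(x,y),(x',y')}$, $\pi^*$ its invariant probability vector, and $\hat\pi(x,y,x',y')=\pi^*(x,y)R^*_{(x,y),(x',y')}$. The function $f$ is also regarded as a function on $E^2\times E^2$ via $f(x,y,x',y')=f(x',y')$. For $g:E^2\times E^2\to\mathbb R$, $\varphi_1(g)$ is the spectral radius of $\Phi_1(g)_{(x,y,z),(x',y',z')}=\exp(g(x,y,x',y')+g(x,z,x',z'))P_{x,x'}Q_{y,y'}Q_{z,z'}$, and $J_1=\sup_g\{2\hat\pi(g)-\log\varphi_1(g)\}$. For $a=(i,j)$ and $\delta\ge1$, $\varepsilon_{a,\delta}(v)=\frac1\delta\sum_{k=1}^\delta 1\{((X_{i+k-1},Y_{j+k-1}),(X_{i+k},Y_{j+k}))=v\}$, $v\in E^2\times E^2$; $d$ is the total variation metric. *)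

theory Defs
  imports "HOL-Analysis.Analysis"
begin

type_synonym 'e mtx = "'e \<Rightarrow> 'e \<Rightarrow> real"

fun mpow :: "('e::finite) mtx \<Rightarrow> nat \<Rightarrow> 'e mtx" where
  "mpow A 0 = (\<lambda>x y. if x = y then 1 else 0)"
| "mpow A (Suc n) = (\<lambda>x y. \<Sum>z\<in>UNIV. mpow A n x z * A z y)"

definition stochastic :: "('e::finite) mtx \<Rightarrow> bool" where
  "stochastic A \<longleftrightarrow> (\<forall>x y. A x y \<ge> 0) \<and> (\<forall>x. (\<Sum>y\<in>UNIV. A x y) = 1)"

definition irreducible_mtx :: "('e::finite) mtx \<Rightarrow> bool" where
  "irreducible_mtx A \<longleftrightarrow> (\<forall>x y. \<exists>n. mpow A n x y > 0)"

definition aperiodic_mtx :: "('e::finite) mtx \<Rightarrow> bool" where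
  "aperiodic_mtx A \<longleftrightarrow> (\<forall>x. Gcd {n::nat. n > 0 \<and> mpow A n x x > 0} = 1)"

definition invariant_prob :: "('e::finite) mtx \<Rightarrow> ('e \<Rightarrow> real) \<Rightarrow> bool" where
  "invariant_prob A p \<longleftrightarrow> (\<forall>x. p x \<ge> 0) \<and> (\<Sum>x\<in>UNIV. p x) = 1 \<and>
     (\<forall>y. (\<Sum>x\<in>UNIV. p x * A x y) = p y)"

definition spec_rad :: "('n::finite) mtx \<Rightarrow> real" where
  "spec_rad A = Max {cmod c | c. \<exists>v::'n \<Rightarrow> complex. (\<exists>i. v i \<noteq> 0) \<and>
      (\<forall>i. (\<Sum>j\<in>UNIV. complex_of_real (A i j) * v j) = c * v i)}"

definition Phi :: "('e::finite) mtx \<Rightarrow> 'e mtx \<Rightarrow> ('e \<times> 'e \<Rightarrow> int) \<Rightarrow> real \<Rightarrow> ('e \<times> 'e) mtx" where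
  "Phi P Q f \<theta> = (\<lambda>(x,y) (x',y'). exp (\<theta> * of_int (f (x',y'))) * P x x' * Q y y')"

text \<open>The tilted kernel R* built from a positive right eigenvector r.\<close>
definition Rstar :: "('e::finite) mtx \<Rightarrow> 'e mtx \<Rightarrow> ('e \<times> 'e \<Rightarrow> int) \<Rightarrow> real \<Rightarrow> ('e \<times> 'e \<Rightarrow> real)
     \<Rightarrow> ('e \<times> 'e) mtx" where
  "Rstar P Q f \<theta> r = (\<lambda>u u'. r u' / r u * Phi P Q f \<theta> u u')"

definition pihat :: "('e::finite) mtx \<Rightarrow> 'e mtx \<Rightarrow> ('e \<times> 'e \<Rightarrow> int) \<Rightarrow> real \<Rightarrow> ('e \<times> 'e \<Rightarrow> real)
     \<Rightarrow> ('e \<times> 'e \<Rightarrow> real) \<Rightarrow> ('e \<times> 'e) \<times> ('e \<times> 'e) \<Rightarrow> real" where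
  "pihat P Q f \<theta> r ps = (\<lambda>(u,u'). ps u * Rstar P Q f \<theta> r u u')"

definition Phi1 :: "('e::finite) mtx \<Rightarrow> 'e mtx \<Rightarrow> (('e \<times> 'e) \<times> ('e \<times> 'e) \<Rightarrow> real)
     \<Rightarrow> ('e \<times> 'e \<times> 'e) mtx" where
  "Phi1 P Q g = (\<lambda>(x,y,z) (x',y',z'). exp (g ((x,y),(x',y')) + g ((x,z),(x',z'))) * P x x' * Q y y' * Q z z')"

definition J1 :: "('e::finite) mtx \<Rightarrow> 'e mtx \<Rightarrow> (('e \<times> 'e) \<times> ('e \<times> 'e) \<Rightarrow> real) \<Rightarrow> ereal" where
  "J1 P Q ph = (SUP g. ereal (2 * (\<Sum>v\<in>UNIV. ph v * g v) - ln (spec_rad (Phi1 P Q g))))"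

definition emp :: "(nat \<Rightarrow> 'e) \<Rightarrow> (nat \<Rightarrow> 'e) \<Rightarrow> nat \<Rightarrow> nat \<Rightarrow> nat \<Rightarrow> ('e \<times> 'e) \<times> ('e \<times> 'e) \<Rightarrow> real" where
  "emp xs ys i j \<delta> v = (1 / real \<delta>) * (\<Sum>k=1..\<delta>.
      (if ((xs (i+k-1), ys (j+k-1)), (xs (i+k), ys (j+k))) = v then 1 else 0))"

definition integ :: "('a::finite \<Rightarrow> real) \<Rightarrow> ('a \<Rightarrow> real) \<Rightarrow> real" where
  "integ \<mu> h = (\<Sum>v\<in>UNIV. \<mu> v * h v)"

definition tv_dist :: "('a::finite \<Rightarrow> real) \<Rightarrow> ('a \<Rightarrow> real) \<Rightarrow> real" where
  "tv_dist \<mu> \<nu> = (1/2) * (\<Sum>v\<in>UNIV. \<bar>\<mu> v - \<nu> v\<bar>)"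

definition path_weight :: "('e \<Rightarrow> real) \<Rightarrow> 'e mtx \<Rightarrow> nat \<Rightarrow> 'e list \<Rightarrow> real" where
  "path_weight p A N xs = p (xs ! 0) * (\<Prod>k<N. A (xs ! k) (xs ! Suc k))"

text \<open>Probability, under independent stationary chains X (kernel P, initial law pP) and
  Y (kernel Q, initial law pQ), of an event depending only on X_0..X_N, Y_0..Y_N.\<close>
definition chain_prob :: "('e::finite \<Rightarrow> real) \<Rightarrow> 'e mtx \<Rightarrow> ('e \<Rightarrow> real) \<Rightarrow> 'e mtx \<Rightarrow> nat
    \<Rightarrow> ((nat \<Rightarrow> 'e) \<Rightarrow> (nat \<Rightarrow> 'e) \<Rightarrow> bool) \<Rightarrow> real" where
  "chain_prob pP P pQ Q N A = (\<Sum>xs\<in>{xs. length xs = Suc N}. \<Sum>ys\<in>{ys. length ys = Suc N}.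
      path_weight pP P N xs * path_weight pQ Q N ys * (if A (nth xs) (nth ys) then 1 else 0))"

end

theory Submission
  imports Defs "Jordan_Normal_Form.Spectral_Radius"
begin

definition cmat :: "('n::finite) mtx \<Rightarrow> (nat \<Rightarrow> 'n) \<Rightarrow> complex mat" where
  "cmat M h = mat CARD('n) CARD('n) (\<lambda>(i,j). complex_of_real (M (h i) (h j)))"

definition eigset :: "('n::finite) mtx \<Rightarrow> complex set" where
  "eigset M = {c. \<exists>v::'n \<Rightarrow> complex. (\<exists>i. v i \<noteq> 0) \<and>
      (\<forall>i. (\<Sum>j\<in>UNIV. complex_of_real (M i j) * v j) = c * v i)}"

lemma spec_rad_eigset: "spec_rad M = Max (cmod ` eigset M)"
  unfolding spec_rad_def eigset_def by (rule arg_cong[where f=Max]) blast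

lemma cmat_carrier: "cmat M h \<in> carrier_mat CARD('n) CARD('n)"
  for M :: "('n::finite) mtx"
  unfolding cmat_def by simp

lemma sum_bij_reindex:
  assumes hb: "bij_betw h {0..<CARD('n)} (UNIV::('n::finite) set)"
  shows "(\<Sum>j\<in>UNIV. F j) = (\<Sum>l\<in>{0..<CARD('n)}. F (h l))"
  using sum.reindex_bij_betw[OF hb, of F] by simp

lemma eigset_spectrum:
  fixes M :: "('n::finite) mtx"
  assumes hb: "bij_betw h {0..<CARD('n)} (UNIV::'n set)"
  shows "eigset M = spectrum (cmat M h)"
proof -
  let ?n = "CARD('n)"
  define hi where "hi = the_inv_into {0..<?n} h"
  have hhi: "h (hi x) = x" for x
    unfolding hi_def using hb by (simp add: bij_betw_def f_the_inv_into_f)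
  have hil: "hi x < ?n" for x
    unfolding hi_def using hb the_inv_into_into[of h "{0..<?n}" x "{0..<?n}"] by (simp add: bij_betw_def)
  have hih: "l < ?n \<Longrightarrow> hi (h l) = l" for l
    unfolding hi_def using hb by (simp add: bij_betw_def the_inv_into_f_f)
  show ?thesis
  proof
    show "eigset M \<subseteq> spectrum (cmat M h)"
    proof
      fix c assume "c \<in> eigset M"
      then obtain v i where vi: "v i \<noteq> 0" and ev: "\<And>i. (\<Sum>j\<in>UNIV. complex_of_real (M i j) * v j) = c * v i"
        unfolding eigset_def by blast
      define w where "w = vec ?n (\<lambda>l. v (h l))"
      have wc: "w \<in> carrier_vec ?n" unfolding w_def by simp
      have wnz: "w \<noteq> 0\<^sub>v ?n"
      proof
        assume "w = 0\<^sub>v ?n"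
        then have "w $ hi i = 0" using hil by simp
        then show False using vi hil hhi unfolding w_def by simp
      qed
      have "cmat M h *\<^sub>v w = c \<cdot>\<^sub>v w"
      proof (rule eq_vecI)
        fix l assume l: "l < dim_vec (c \<cdot>\<^sub>v w)"
        then have l': "l < ?n" unfolding w_def by simp
        have "(cmat M h *\<^sub>v w) $ l = (\<Sum>k\<in>{0..<?n}. complex_of_real (M (h l) (h k)) * v (h k))"
          using l' unfolding cmat_def w_def by (simp add: scalar_prod_def row_def)
        also have "\<dots> = (\<Sum>j\<in>UNIV. complex_of_real (M (h l) j) * v j)"
          using sum_bij_reindex[OF hb, of "\<lambda>j. complex_of_real (M (h l) j) * v j"] by simp
        also have "\<dots> = c * v (h l)" by (rule ev)
        also have "\<dots> = (c \<cdot>\<^sub>v w) $ l" using l' unfolding w_def by simp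
        finally show "(cmat M h *\<^sub>v w) $ l = (c \<cdot>\<^sub>v w) $ l" .
      qed (simp add: cmat_def w_def)
      then have "eigenvector (cmat M h) w c"
        unfolding eigenvector_def using wc wnz cmat_carrier[of M h] by simp
      then show "c \<in> spectrum (cmat M h)" unfolding spectrum_def eigenvalue_def by auto
    qed
  next
    show "spectrum (cmat M h) \<subseteq> eigset M"
    proof
      fix c assume "c \<in> spectrum (cmat M h)"
      then obtain w where ew: "eigenvector (cmat M h) w c" unfolding spectrum_def eigenvalue_def by auto
      have dr: "dim_row (cmat M h) = ?n" unfolding cmat_def by simp
      from ew have wc: "w \<in> carrier_vec ?n" and wnz: "w \<noteq> 0\<^sub>v ?n" and eq: "cmat M h *\<^sub>v w = c \<cdot>\<^sub>v w"
        unfolding eigenvector_def dr by auto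
      define v where "v x = w $ (hi x)" for x
      have "\<exists>l<?n. w $ l \<noteq> 0"
      proof (rule ccontr)
        assume "\<not> ?thesis"
        then have "w = 0\<^sub>v ?n" using wc by (intro eq_vecI) auto
        with wnz show False by simp
      qed
      then obtain l where l: "l < ?n" "w $ l \<noteq> 0" by auto
      have vnz: "v (h l) \<noteq> 0" unfolding v_def using l hih by simp
      have "(\<Sum>j\<in>UNIV. complex_of_real (M i j) * v j) = c * v i" for i
      proof -
        have "(\<Sum>j\<in>UNIV. complex_of_real (M i j) * v j) = (\<Sum>k\<in>{0..<?n}. complex_of_real (M i (h k)) * v (h k))"
          by (rule sum_bij_reindex[OF hb])
        also have "\<dots> = (\<Sum>k\<in>{0..<?n}. complex_of_real (M (h (hi i)) (h k)) * w $ k)"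
          unfolding v_def using hhi hih by (intro sum.cong) auto
        also have "\<dots> = (cmat M h *\<^sub>v w) $ (hi i)"
          using hil wc unfolding cmat_def by (simp add: scalar_prod_def row_def)
        also have "\<dots> = c * v i" unfolding eq v_def using hil wc by simp
        finally show ?thesis .
      qed
      then show "c \<in> eigset M" unfolding eigset_def using vnz by blast
    qed
  qed
qed

lemma cmat_pow:
  fixes M :: "('n::finite) mtx"
  assumes hb: "bij_betw h {0..<CARD('n)} (UNIV::'n set)"
    and i: "i < CARD('n)" and j: "j < CARD('n)"
  shows "(cmat M h ^\<^sub>m k) $$ (i,j) = complex_of_real (mpow M k (h i) (h j))"
  using i j
proof (induction k arbitrary: j)
  case 0
  have inj: "inj_on h {0..<CARD('n)}" using hb bij_betw_def by blast
  have "(h i = h j) = (i = j)" using inj_on_eq_iff[OF inj, of i j] 0 by simp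
  then show ?case using 0 by (simp add: cmat_def)
next
  case (Suc k)
  let ?n = "CARD('n)"
  have "(cmat M h ^\<^sub>m Suc k) $$ (i,j) = (\<Sum>l\<in>{0..<?n}. (cmat M h ^\<^sub>m k) $$ (i,l) * cmat M h $$ (l,j))"
    using Suc.prems cmat_carrier[of M h] by (simp add: scalar_prod_def row_def col_def)
  also have "\<dots> = (\<Sum>l\<in>{0..<?n}. complex_of_real (mpow M k (h i) (h l) * M (h l) (h j)))"
    using Suc by (intro sum.cong) (auto simp: cmat_def)
  also have "\<dots> = complex_of_real (\<Sum>l\<in>{0..<?n}. mpow M k (h i) (h l) * M (h l) (h j))"
    by simp
  also have "(\<Sum>l\<in>{0..<?n}. mpow M k (h i) (h l) * M (h l) (h j)) = mpow M (Suc k) (h i) (h j)"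
    using sum_bij_reindex[OF hb, of "\<lambda>z. mpow M k (h i) z * M z (h j)"] by simp
  finally show ?case .
qed

lemma exists_bij_fin: "\<exists>h. bij_betw h {0..<CARD('n)} (UNIV::('n::finite) set)"
  using ex_bij_betw_nat_finite[of "UNIV::'n set"] by auto

lemma spec_rad_spectral_radius:
  fixes M :: "('n::finite) mtx"
  assumes hb: "bij_betw h {0..<CARD('n)} (UNIV::'n set)"
  shows "spec_rad M = spectral_radius (cmat M h)"
  unfolding spec_rad_eigset spectral_radius_def eigset_spectrum[OF hb] by simp

lemma spec_rad_nonneg: "spec_rad (M::('n::finite) mtx) \<ge> 0"
proof -
  obtain h where hb: "bij_betw h {0..<CARD('n)} (UNIV::'n set)" using exists_bij_fin by blast
  from spectral_radius_mem_max(1)[OF cmat_carrier[of M h]]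
  have "spectral_radius (cmat M h) \<in> norm ` spectrum (cmat M h)" by simp
  then show ?thesis unfolding spec_rad_spectral_radius[OF hb] by auto
qed

lemma mpow_scale: "mpow (\<lambda>i j. M i j / r) k a b = mpow M k a b / r ^ k"
  by (induction k arbitrary: b) (auto simp: sum_divide_distrib mult.commute)

lemma gelfand:
  fixes M :: "('n::finite) mtx"
  assumes lt: "spec_rad M < r"
  shows "\<exists>C. \<forall>k a b. \<bar>mpow M k a b\<bar> \<le> C * r ^ k"
proof -
  obtain h where hb: "bij_betw h {0..<CARD('n)} (UNIV::'n set)" using exists_bij_fin by blast
  let ?n = "CARD('n)"
  have r: "r > 0" using lt spec_rad_nonneg[of M] by linarith
  define M' where "M' = (\<lambda>i j. M i j / r)"
  from spectral_radius_mem_max(1)[OF cmat_carrier[of M' h]]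
  obtain c where c: "c \<in> eigset M'" and sr: "spectral_radius (cmat M' h) = cmod c"
    unfolding eigset_spectrum[OF hb] by auto
  have "of_real r * c \<in> eigset M"
  proof -
    from c obtain v where "\<exists>i. v i \<noteq> 0" and ev: "\<And>i. (\<Sum>j\<in>UNIV. complex_of_real (M' i j) * v j) = c * v i"
      unfolding eigset_def by blast
    moreover have "(\<Sum>j\<in>UNIV. complex_of_real (M i j) * v j) = of_real r * c * v i" for i
    proof -
      have "(\<Sum>j\<in>UNIV. complex_of_real (M i j) * v j) = of_real r * (\<Sum>j\<in>UNIV. complex_of_real (M' i j) * v j)"
        unfolding M'_def sum_distrib_left using r by (intro sum.cong) (auto simp: field_simps)
      then show ?thesis using ev[of i] by simp
    qed
    ultimately show ?thesis unfolding eigset_def by blast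
  qed
  then have "cmod (of_real r * c) \<in> norm ` spectrum (cmat M h)" unfolding eigset_spectrum[OF hb] by blast
  from spectral_radius_mem_max(2)[OF cmat_carrier[of M h] _ this]
  have "r * cmod c \<le> spec_rad M" unfolding spec_rad_spectral_radius[OF hb] using r
    by (simp add: norm_mult)
  with lt have "r * cmod c < r * 1" by simp
  then have "cmod c < 1" using r by (simp only: mult_less_cancel_left_pos)
  then have "spectral_radius (cmat M' h) < 1" using sr by simp
  from spectral_radius_jnf_norm_bound_less_1_upper_triangular[OF cmat_carrier this]
  obtain C where C: "\<And>k. norm_bound (cmat M' h ^\<^sub>m k) C" by blast
  define hi where "hi = the_inv_into {0..<?n} h"
  have hhi: "h (hi x) = x" for x
    unfolding hi_def using hb by (simp add: bij_betw_def f_the_inv_into_f)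
  have hil: "hi x < ?n" for x
    unfolding hi_def using hb the_inv_into_into[of h "{0..<?n}" x "{0..<?n}"] by (simp add: bij_betw_def)
  have "\<bar>mpow M k a b\<bar> \<le> C * r ^ k" for k a b
  proof -
    have "norm ((cmat M' h ^\<^sub>m k) $$ (hi a, hi b)) \<le> C"
      using C[of k] hil cmat_carrier[of M' h] unfolding norm_bound_def by auto
    then have "\<bar>mpow M' k a b\<bar> \<le> C"
      using cmat_pow[OF hb hil hil, of M' k] hhi by simp
    then have "\<bar>mpow M k a b\<bar> / r ^ k \<le> C" unfolding M'_def mpow_scale using r by simp
    then show ?thesis using r by (simp add: divide_le_eq mult.commute)
  qed
  then show ?thesis by blast
qed

lemma mpow_nonneg: "(\<forall>i j. M i j \<ge> 0) \<Longrightarrow> mpow M k a b \<ge> 0"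
  by (induction k arbitrary: b) (auto intro: sum_nonneg)

lemma mpow_rowsum:
  assumes nn: "\<forall>i j. M i j \<ge> 0" and rs: "\<forall>i. (\<Sum>j\<in>UNIV. M i j) \<ge> c0" and c0: "c0 \<ge> 0"
  shows "(\<Sum>b\<in>UNIV. mpow M k a b) \<ge> c0 ^ k"
proof (induction k)
  case 0 then show ?case by simp
next
  case (Suc k)
  have "(\<Sum>b\<in>UNIV. mpow M (Suc k) a b) = (\<Sum>z\<in>UNIV. mpow M k a z * (\<Sum>b\<in>UNIV. M z b))"
    by (simp add: sum_distrib_left) (rule sum.swap)
  also have "\<dots> \<ge> (\<Sum>z\<in>UNIV. mpow M k a z * c0)"
    using rs mpow_nonneg[OF nn] by (intro sum_mono mult_left_mono) auto
  also have "(\<Sum>z\<in>UNIV. mpow M k a z * c0) = (\<Sum>z\<in>UNIV. mpow M k a z) * c0" by (simp add: sum_distrib_right)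
  finally show ?case using Suc c0 by (smt (verit) mult_right_mono power_Suc2)
qed

lemma spec_rad_ge:
  fixes M :: "('n::finite) mtx"
  assumes nn: "\<forall>i j. M i j \<ge> 0" and rs: "\<forall>i. (\<Sum>j\<in>UNIV. M i j) \<ge> c0" and c0: "c0 > 0"
  shows "spec_rad M \<ge> c0"
proof (rule ccontr)
  assume "\<not> ?thesis"
  then have lt: "spec_rad M < c0" by simp
  define r where "r = (spec_rad M + c0) / 2"
  have r1: "spec_rad M < r" "r < c0" using lt unfolding r_def by auto
  have r0: "r > 0" using r1 spec_rad_nonneg[of M] by linarith
  obtain C where C: "\<And>k a b. \<bar>mpow M k a b\<bar> \<le> C * r ^ k" using gelfand[OF r1(1)] by blast
  fix a :: 'n
  have "c0 ^ k \<le> real CARD('n) * C * r ^ k" for k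
  proof -
    have "c0 ^ k \<le> (\<Sum>b\<in>UNIV. mpow M k a b)" using mpow_rowsum[OF nn rs] c0 by simp
    also have "\<dots> \<le> (\<Sum>b\<in>(UNIV::'n set). C * r ^ k)" using C by (intro sum_mono) (meson abs_le_D1)
    finally show ?thesis by simp
  qed
  then have "(c0 / r) ^ k \<le> real CARD('n) * C" for k
    using r0 by (simp add: power_divide divide_le_eq)
  moreover obtain k where "real CARD('n) * C < (c0 / r) ^ k"
    using real_arch_pow[of "c0 / r" "real CARD('n) * C"] r1 r0 by (auto simp: field_simps)
  ultimately show False by (meson not_le)
qed


definition pprod :: "('a \<Rightarrow> 'a \<Rightarrow> real) \<Rightarrow> nat \<Rightarrow> 'a list \<Rightarrow> real" where
  "pprod A n xs = (\<Prod>k<n. A (xs ! k) (xs ! Suc k))"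

abbreviation lenset :: "nat \<Rightarrow> 'a list set" where
  "lenset n \<equiv> {xs. length xs = n}"

lemma finite_lenset: "finite (lenset n :: ('a::finite) list set)"
  using finite_lists_length_eq[of "UNIV::'a set" n] by simp

lemma sum_lists_append:
  fixes F :: "('a::finite) list \<Rightarrow> real"
  shows "(\<Sum>xs\<in>lenset (a + b). F xs) = (\<Sum>xs\<in>lenset a. \<Sum>ys\<in>lenset b. F (xs @ ys))"
proof -
  have "(\<Sum>xs\<in>lenset (a + b). F xs) = (\<Sum>p\<in>lenset a \<times> lenset b. (\<lambda>(xs, ys). F (xs @ ys)) p)"
    by (rule sum.reindex_bij_witness[where i="\<lambda>(xs, ys). xs @ ys" and j="\<lambda>zs. (take a zs, drop a zs)"]) auto
  also have "\<dots> = (\<Sum>xs\<in>lenset a. \<Sum>ys\<in>lenset b. F (xs @ ys))"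
    by (simp add: sum.cartesian_product)
  finally show ?thesis .
qed

lemma sum_lists_1:
  fixes F :: "('a::finite) list \<Rightarrow> real"
  shows "(\<Sum>xs\<in>lenset (Suc 0). F xs) = (\<Sum>x\<in>UNIV. F [x])"
proof -
  have img: "lenset (Suc 0) = (\<lambda>x. [x]) ` (UNIV::'a set)"
  proof
    show "lenset (Suc 0) \<subseteq> (\<lambda>x. [x]) ` (UNIV::'a set)"
    proof
      fix xs assume "xs \<in> lenset (Suc 0)"
      then obtain x where "xs = [x]" by (auto simp: length_Suc_conv)
      then show "xs \<in> (\<lambda>x. [x]) ` UNIV" by blast
    qed
  qed auto
  show ?thesis unfolding img by (subst sum.reindex) (auto simp: inj_on_def)
qed

lemma sum_lists_snoc:
  fixes F :: "('a::finite) list \<Rightarrow> real"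
  shows "(\<Sum>xs\<in>lenset (Suc n). F xs) = (\<Sum>xs\<in>lenset n. \<Sum>y\<in>UNIV. F (xs @ [y]))"
  using sum_lists_append[of F n 1] by (simp add: sum_lists_1)

lemma pprod_append:
  assumes la: "length xa = Suc a" and lb: "length xb = Suc b"
  shows "pprod A (a + 1 + b) (xa @ xb) = pprod A a xa * A (xa ! a) (xb ! 0) * pprod A b xb"
proof -
  let ?f = "\<lambda>k. A ((xa @ xb) ! k) ((xa @ xb) ! Suc k)"
  have "pprod A (a + 1 + b) (xa @ xb) = prod ?f {0..<a} * prod ?f {a..<a+1} * prod ?f {a+1..<a+1+b}"
    unfolding pprod_def lessThan_atLeast0
    using prod.atLeastLessThan_concat[of 0 "a+1" "a+1+b" ?f] prod.atLeastLessThan_concat[of 0 a "a+1" ?f]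
    by simp
  also have "prod ?f {0..<a} = pprod A a xa"
    unfolding pprod_def lessThan_atLeast0 using la by (intro prod.cong) (auto simp: nth_append)
  also have "prod ?f {a..<a+1} = A (xa ! a) (xb ! 0)" using la by (simp add: nth_append)
  also have "prod ?f {a+1..<a+1+b} = prod (\<lambda>k. ?f (k + (a+1))) {0..<b}"
    using prod.shift_bounds_nat_ivl[of ?f 0 "a+1" b] by (simp add: add.commute)
  also have "\<dots> = pprod A b xb"
    unfolding pprod_def lessThan_atLeast0 using la by (intro prod.cong) (auto simp: nth_append)
  finally show ?thesis .
qed

lemma pprod_append':
  assumes "length xa = Suc a" and "length xb = Suc b" and "n = a + 1 + b"
  shows "pprod A n (xa @ xb) = pprod A a xa * A (xa ! a) (xb ! 0) * pprod A b xb"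
  using pprod_append[OF assms(1,2)] assms(3) by simp

lemma pprod_snoc:
  assumes la: "length xa = Suc a"
  shows "pprod A (Suc a) (xa @ [y]) = pprod A a xa * A (xa ! a) y"
  using pprod_append[OF la, of "[y]" 0 A] by (simp add: pprod_def)

lemma pprod_nonneg: "(\<forall>i j. A i j \<ge> 0) \<Longrightarrow> pprod A n xs \<ge> 0"
  unfolding pprod_def by (intro prod_nonneg) auto

lemma total_mass:
  fixes A :: "('a::finite) mtx"
  assumes st: "stochastic A"
  shows "(\<Sum>xs\<in>lenset (Suc n). p (xs ! 0) * pprod A n xs) = (\<Sum>x\<in>UNIV. p x)"
proof (induction n)
  case 0
  show ?case using sum_lists_1[of "\<lambda>xs. p (xs ! 0) * pprod A 0 xs"] by (simp add: pprod_def)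
next
  case (Suc n)
  have rs: "(\<Sum>y\<in>UNIV. A x y) = 1" for x using st unfolding stochastic_def by auto
  have "(\<Sum>xs\<in>lenset (Suc (Suc n)). p (xs ! 0) * pprod A (Suc n) xs)
      = (\<Sum>xs\<in>lenset (Suc n). \<Sum>y\<in>UNIV. p ((xs @ [y]) ! 0) * pprod A (Suc n) (xs @ [y]))"
    by (rule sum_lists_snoc)
  also have "\<dots> = (\<Sum>xs\<in>lenset (Suc n). \<Sum>y\<in>UNIV. p (xs ! 0) * pprod A n xs * A (xs ! n) y)"
    by (intro sum.cong refl) (auto simp: pprod_snoc nth_append)
  also have "\<dots> = (\<Sum>xs\<in>lenset (Suc n). p (xs ! 0) * pprod A n xs)"
    by (intro sum.cong refl) (simp add: sum_distrib_left[symmetric] rs)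
  finally show ?case using Suc by simp
qed

lemma head_drop:
  fixes A :: "('a::finite) mtx"
  assumes st: "stochastic A" and p0: "\<forall>x. p x \<ge> 0" and p1: "(\<Sum>x\<in>UNIV. p x) \<le> 1"
    and H0: "\<forall>l. H l \<ge> 0"
  shows "(\<Sum>xs\<in>lenset (m + L + 1). p (xs ! 0) * pprod A (m + L) xs * H (drop m xs))
         \<le> (\<Sum>xa\<in>lenset (L + 1). pprod A L xa * H xa)"
proof (cases m)
  case 0
  have "p x \<le> 1" for x
    using member_le_sum[of x UNIV p] p0 p1 by (simp add: finite_UNIV)
  then have "p (xs ! 0) * pprod A (m + L) xs * H (drop m xs) \<le> pprod A L xs * H xs" for xs
    using 0 H0 pprod_nonneg[of A L xs] st unfolding stochastic_def
    by (simp add: mult.assoc mult_left_le_one_le mult_nonneg_nonneg p0)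
  then show ?thesis using 0 by (simp add: sum_mono)
next
  case (Suc m')
  have A0: "\<forall>i j. A i j \<ge> 0" using st unfolding stochastic_def by auto
  have rs: "(\<Sum>y\<in>UNIV. A x y) = 1" for x using st unfolding stochastic_def by auto
  define q where "q y = (\<Sum>xp\<in>lenset (Suc m'). p (xp ! 0) * pprod A m' xp * A (xp ! m') y)" for y
  have q0: "q y \<ge> 0" for y unfolding q_def using p0 A0 pprod_nonneg[OF A0]
    by (intro sum_nonneg mult_nonneg_nonneg) auto
  have "(\<Sum>y\<in>UNIV. q y) = (\<Sum>xp\<in>lenset (Suc m'). p (xp ! 0) * pprod A m' xp)"
    unfolding q_def by (subst sum.swap) (simp add: sum_distrib_left[symmetric] rs)
  also have "\<dots> = (\<Sum>x\<in>UNIV. p x)" by (rule total_mass[OF st])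
  finally have q1: "q y \<le> 1" for y
    using member_le_sum[of y UNIV q] q0 p1 by (simp add: finite_UNIV)
  have "(\<Sum>xs\<in>lenset (m + L + 1). p (xs ! 0) * pprod A (m + L) xs * H (drop m xs))
      = (\<Sum>xp\<in>lenset (Suc m'). \<Sum>xa\<in>lenset (L + 1). p ((xp @ xa) ! 0) * pprod A (m' + 1 + L) (xp @ xa) * H (drop m (xp @ xa)))"
    using sum_lists_append[of "\<lambda>xs. p (xs ! 0) * pprod A (m + L) xs * H (drop m xs)" "Suc m'" "L + 1"] Suc
    by simp
  also have "\<dots> = (\<Sum>xp\<in>lenset (Suc m'). \<Sum>xa\<in>lenset (L + 1). p (xp ! 0) * pprod A m' xp * A (xp ! m') (xa ! 0) * (pprod A L xa * H xa))"
  proof (intro sum.cong refl)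
    fix xp xa :: "('a::finite) list" assume "xp \<in> lenset (Suc m')" "xa \<in> lenset (L + 1)"
    then show "p ((xp @ xa) ! 0) * pprod A (m' + 1 + L) (xp @ xa) * H (drop m (xp @ xa)) =
         p (xp ! 0) * pprod A m' xp * A (xp ! m') (xa ! 0) * (pprod A L xa * H xa)"
      using pprod_append'[of xp m' xa L "m' + 1 + L" A] Suc by (simp add: nth_append)
  qed
  also have "\<dots> = (\<Sum>xa\<in>lenset (L + 1). q (xa ! 0) * (pprod A L xa * H xa))"
    unfolding q_def by (subst sum.swap) (simp add: sum_distrib_right)
  also have "\<dots> \<le> (\<Sum>xa\<in>lenset (L + 1). pprod A L xa * H xa)"
    using q0 q1 H0 pprod_nonneg[OF A0] by (intro sum_mono) (simp add: mult_left_le_one_le mult_nonneg_nonneg)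
  finally show ?thesis .
qed

lemma tail_drop:
  fixes A :: "('a::finite) mtx"
  assumes st: "stochastic A"
  shows "(\<Sum>xs\<in>lenset (K + 1 + M). p (xs ! 0) * pprod A (K + M) xs * H (take (K + 1) xs))
         = (\<Sum>xa\<in>lenset (K + 1). p (xa ! 0) * pprod A K xa * H xa)"
proof (cases M)
  case 0
  then show ?thesis by (intro sum.cong) auto
next
  case (Suc M')
  have rs: "(\<Sum>y\<in>UNIV. A x y) = 1" for x using st unfolding stochastic_def by auto
  have "(\<Sum>xs\<in>lenset (K + 1 + M). p (xs ! 0) * pprod A (K + M) xs * H (take (K + 1) xs))
      = (\<Sum>xa\<in>lenset (K + 1). \<Sum>xb\<in>lenset (Suc M'). p ((xa @ xb) ! 0) * pprod A (K + 1 + M') (xa @ xb) * H (take (K + 1) (xa @ xb)))"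
    using sum_lists_append[of "\<lambda>xs. p (xs ! 0) * pprod A (K + M) xs * H (take (K + 1) xs)" "K + 1" "Suc M'"] Suc
    by simp
  also have "\<dots> = (\<Sum>xa\<in>lenset (K + 1). \<Sum>xb\<in>lenset (Suc M'). p (xa ! 0) * pprod A K xa * H xa * (A (xa ! K) (xb ! 0) * pprod A M' xb))"
  proof (intro sum.cong refl)
    fix xa xb :: "('a::finite) list" assume "xa \<in> lenset (K + 1)" "xb \<in> lenset (Suc M')"
    then show "p ((xa @ xb) ! 0) * pprod A (K + 1 + M') (xa @ xb) * H (take (K + 1) (xa @ xb)) =
         p (xa ! 0) * pprod A K xa * H xa * (A (xa ! K) (xb ! 0) * pprod A M' xb)"
      using pprod_append'[of xa K xb M' "K + 1 + M'" A] by (simp add: nth_append)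
  qed
  also have "\<dots> = (\<Sum>xa\<in>lenset (K + 1). p (xa ! 0) * pprod A K xa * H xa)"
    by (intro sum.cong refl) (simp add: sum_distrib_left[symmetric] total_mass[OF st] rs)
  finally show ?thesis .
qed

lemma path_sum_gen:
  fixes M :: "('a::finite) mtx"
  shows "(\<Sum>ts\<in>lenset (Suc n). pprod M n ts * h (ts ! n)) = (\<Sum>a\<in>UNIV. \<Sum>b\<in>UNIV. mpow M n a b * h b)"
proof (induction n arbitrary: h)
  case 0
  have "(\<Sum>b\<in>UNIV. (if a = b then 1 else 0) * h b) = (\<Sum>b\<in>UNIV. if a = b then h b else 0)" for a
    by (rule sum.cong) auto
  then have "(\<Sum>b\<in>UNIV. (if a = b then 1 else 0) * h b) = h a" for a by simp
  then show ?case using sum_lists_1[of "\<lambda>ts. pprod M 0 ts * h (ts ! 0)"] by (simp add: pprod_def sum.delta)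
next
  case (Suc n)
  have "(\<Sum>ts\<in>lenset (Suc (Suc n)). pprod M (Suc n) ts * h (ts ! Suc n))
      = (\<Sum>ts\<in>lenset (Suc n). \<Sum>y\<in>UNIV. pprod M (Suc n) (ts @ [y]) * h ((ts @ [y]) ! Suc n))"
    by (rule sum_lists_snoc)
  also have "\<dots> = (\<Sum>ts\<in>lenset (Suc n). pprod M n ts * (\<lambda>b. \<Sum>y\<in>UNIV. M b y * h y) (ts ! n))"
    by (intro sum.cong refl) (auto simp: pprod_snoc nth_append sum_distrib_left mult.assoc)
  also have "\<dots> = (\<Sum>a\<in>UNIV. \<Sum>b\<in>UNIV. mpow M n a b * (\<Sum>y\<in>UNIV. M b y * h y))"
    by (rule Suc.IH)
  also have "\<dots> = (\<Sum>a\<in>UNIV. \<Sum>y\<in>UNIV. mpow M (Suc n) a y * h y)"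
    by (rule sum.cong[OF refl]) (simp add: sum_distrib_left sum_distrib_right mult.assoc, rule sum.swap)
  finally show ?case .
qed

lemma path_sum:
  fixes M :: "('a::finite) mtx"
  shows "(\<Sum>ts\<in>lenset (Suc n). pprod M n ts) = (\<Sum>a\<in>UNIV. \<Sum>b\<in>UNIV. mpow M n a b)"
  using path_sum_gen[of M n "\<lambda>_. 1"] by simp

lemma sum_zip:
  fixes F :: "('a::finite \<times> 'b::finite) list \<Rightarrow> real"
  shows "(\<Sum>xs\<in>lenset n. \<Sum>ys\<in>lenset n. F (zip xs ys)) = (\<Sum>ts\<in>lenset n. F ts)"
proof -
  have "(\<Sum>ts\<in>lenset n. F ts) = (\<Sum>p\<in>lenset n \<times> lenset n. (\<lambda>(xs, ys). F (zip xs ys)) p)"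
    by (rule sum.reindex_bij_witness[where i="\<lambda>(xs, ys). zip xs ys" and j="\<lambda>ts. (map fst ts, map snd ts)"])
       (auto simp: zip_map_fst_snd)
  also have "\<dots> = (\<Sum>xs\<in>lenset n. \<Sum>ys\<in>lenset n. F (zip xs ys))"
    by (simp add: sum.cartesian_product)
  finally show ?thesis by simp
qed


definition Sg :: "(('e \<times> 'e) \<times> ('e \<times> 'e) \<Rightarrow> real) \<Rightarrow> nat \<Rightarrow> 'e list \<Rightarrow> 'e list \<Rightarrow> real" where
  "Sg g n xa ya = (\<Sum>k<n. g ((xa ! k, ya ! k), (xa ! Suc k, ya ! Suc k)))"

definition Vw :: "('e::finite) mtx \<Rightarrow> (('e \<times> 'e) \<times> ('e \<times> 'e) \<Rightarrow> real) \<Rightarrow> nat \<Rightarrow> 'e list \<Rightarrow> real" where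
  "Vw Q g n xa = (\<Sum>ya\<in>lenset (Suc n). pprod Q n ya * exp (Sg g n xa ya))"

lemma Sg_cong:
  assumes "\<forall>k\<le>n. xa ! k = xa' ! k" "\<forall>k\<le>n. ya ! k = ya' ! k"
  shows "Sg g n xa ya = Sg g n xa' ya'"
  unfolding Sg_def using assms by (intro sum.cong refl) auto

lemma Vw_cong:
  assumes "\<forall>k\<le>n. xa ! k = xa' ! k"
  shows "Vw Q g n xa = Vw Q g n xa'"
proof -
  have "Sg g n xa ya = Sg g n xa' ya" for ya by (rule Sg_cong) (use assms in auto)
  then show ?thesis unfolding Vw_def by simp
qed

lemma Vw_nonneg: "stochastic Q \<Longrightarrow> Vw Q g n xa \<ge> 0"
  unfolding Vw_def using pprod_nonneg[of Q] unfolding stochastic_def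
  by (intro sum_nonneg mult_nonneg_nonneg) auto

lemma pprod_Phi1:
  assumes "length xa = Suc n" "length ya = Suc n" "length za = Suc n"
  shows "pprod (Phi1 P Q g) n (zip xa (zip ya za)) =
    pprod P n xa * pprod Q n ya * pprod Q n za * exp (Sg g n xa ya + Sg g n xa za)"
proof -
  have "pprod (Phi1 P Q g) n (zip xa (zip ya za)) =
     (\<Prod>k<n. exp (g ((xa ! k, ya ! k), (xa ! Suc k, ya ! Suc k)) + g ((xa ! k, za ! k), (xa ! Suc k, za ! Suc k)))
        * P (xa ! k) (xa ! Suc k) * Q (ya ! k) (ya ! Suc k) * Q (za ! k) (za ! Suc k))"
    unfolding pprod_def Phi1_def using assms by (intro prod.cong refl) auto
  also have "\<dots> = pprod P n xa * pprod Q n ya * pprod Q n za * exp (Sg g n xa ya + Sg g n xa za)"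
    unfolding pprod_def Sg_def exp_add exp_sum[OF finite_lessThan] prod.distrib[symmetric] sum.distrib[symmetric]
    by (simp add: prod.distrib mult_ac)
  finally show ?thesis .
qed

lemma Z_eq:
  fixes P Q :: "('e::finite) mtx"
  shows "(\<Sum>xa\<in>lenset (Suc n). pprod P n xa * (Vw Q g n xa)\<^sup>2)
       = (\<Sum>ts\<in>lenset (Suc n). pprod (Phi1 P Q g) n ts)"
proof -
  have "(\<Sum>xa\<in>lenset (Suc n). pprod P n xa * (Vw Q g n xa)\<^sup>2)
      = (\<Sum>xa\<in>lenset (Suc n). \<Sum>ya\<in>lenset (Suc n). \<Sum>za\<in>lenset (Suc n).
            pprod P n xa * pprod Q n ya * pprod Q n za * exp (Sg g n xa ya + Sg g n xa za))"
    unfolding Vw_def power2_eq_square sum_product exp_add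
    by (simp add: sum_distrib_left mult_ac)
  also have "\<dots> = (\<Sum>xa\<in>lenset (Suc n). \<Sum>ya\<in>lenset (Suc n). \<Sum>za\<in>lenset (Suc n).
            pprod (Phi1 P Q g) n (zip xa (zip ya za)))"
    by (intro sum.cong refl) (simp add: pprod_Phi1)
  also have "\<dots> = (\<Sum>xa\<in>lenset (Suc n). \<Sum>ts\<in>lenset (Suc n). pprod (Phi1 P Q g) n (zip xa ts))"
    by (intro sum.cong refl) (rule sum_zip)
  also have "\<dots> = (\<Sum>ts\<in>lenset (Suc n). pprod (Phi1 P Q g) n ts)"
    by (rule sum_zip)
  finally show ?thesis .
qed

lemma Z_bound:
  fixes P Q :: "('e::finite) mtx"
  assumes Cb: "\<forall>n a b. mpow (Phi1 P Q g) n a b \<le> C * r ^ n"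
  shows "(\<Sum>xa\<in>lenset (Suc n). pprod P n xa * (Vw Q g n xa)\<^sup>2)
       \<le> real (CARD('e \<times> 'e \<times> 'e))^2 * C * r ^ n"
proof -
  have "(\<Sum>xa\<in>lenset (Suc n). pprod P n xa * (Vw Q g n xa)\<^sup>2)
      = (\<Sum>a\<in>UNIV. \<Sum>b\<in>UNIV. mpow (Phi1 P Q g) n a b)"
    unfolding Z_eq path_sum ..
  also have "\<dots> \<le> (\<Sum>a\<in>(UNIV::('e \<times> 'e \<times> 'e) set). \<Sum>b\<in>(UNIV::('e \<times> 'e \<times> 'e) set). C * r ^ n)"
    using Cb by (intro sum_mono) auto
  also have "\<dots> = real (CARD('e \<times> 'e \<times> 'e))^2 * C * r ^ n"
    by (simp add: power2_eq_square)
  finally show ?thesis .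
qed

lemma Y_decouple:
  fixes P Q :: "('e::finite) mtx"
  assumes stQ: "stochastic Q" and pQ: "invariant_prob Q piQ"
    and lx: "length xs = Suc N" and N: "N = i + T + d2" and gap: "i + T \<ge> d1 + 1"
  shows "(\<Sum>ys\<in>lenset (Suc N). piQ (ys ! 0) * pprod Q N ys * exp (Sg g d1 xs ys + Sg g d2 (drop i xs) (drop (i + T) ys)))
     \<le> Vw Q g d1 xs * Vw Q g d2 (drop i xs)"
proof -
  define gp where "gp = i + T - d1 - 1"
  have SN: "Suc N = (d1 + 1) + (gp + d2 + 1)" unfolding gp_def N using gap by simp
  have Q0: "\<forall>i j. Q i j \<ge> 0" and Q1: "\<forall>x. (\<Sum>y\<in>UNIV. Q x y) = 1" using stQ unfolding stochastic_def by auto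
  have pQ0: "\<forall>x. piQ x \<ge> 0" and pQ1: "(\<Sum>x\<in>UNIV. piQ x) = 1" using pQ unfolding invariant_prob_def by auto
  have pQle: "piQ x \<le> 1" for x
    using member_le_sum[of x UNIV piQ] pQ0 pQ1 by simp
  define V2 where "V2 = Vw Q g d2 (drop i xs)"
  define H where "H l = exp (Sg g d2 (drop i xs) l)" for l
  have inner: "(\<Sum>yr\<in>lenset (gp + d2 + 1). Q (ya ! d1) (yr ! 0) * pprod Q (gp + d2) yr * H (drop gp yr)) \<le> V2" for ya
  proof -
    have "(\<Sum>yr\<in>lenset (gp + d2 + 1). Q (ya ! d1) (yr ! 0) * pprod Q (gp + d2) yr * H (drop gp yr))
        \<le> (\<Sum>yb\<in>lenset (d2 + 1). pprod Q d2 yb * H yb)"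
      by (rule head_drop[OF stQ]) (use Q0 Q1 in \<open>auto simp: H_def\<close>)
    also have "\<dots> = V2" unfolding V2_def Vw_def H_def by simp
    finally show ?thesis .
  qed
  have "(\<Sum>ys\<in>lenset (Suc N). piQ (ys ! 0) * pprod Q N ys * exp (Sg g d1 xs ys + Sg g d2 (drop i xs) (drop (i + T) ys)))
     = (\<Sum>ya\<in>lenset (d1 + 1). \<Sum>yr\<in>lenset (gp + d2 + 1). piQ ((ya @ yr) ! 0) * pprod Q N (ya @ yr) *
          exp (Sg g d1 xs (ya @ yr) + Sg g d2 (drop i xs) (drop (i + T) (ya @ yr))))"
    unfolding SN by (rule sum_lists_append)
  also have "\<dots> = (\<Sum>ya\<in>lenset (d1 + 1). piQ (ya ! 0) * pprod Q d1 ya * exp (Sg g d1 xs ya) *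
         (\<Sum>yr\<in>lenset (gp + d2 + 1). Q (ya ! d1) (yr ! 0) * pprod Q (gp + d2) yr * H (drop gp yr)))"
  proof (intro sum.cong refl)
    fix ya :: "'e list" assume ya: "ya \<in> lenset (d1 + 1)"
    show "(\<Sum>yr\<in>lenset (gp + d2 + 1). piQ ((ya @ yr) ! 0) * pprod Q N (ya @ yr) *
          exp (Sg g d1 xs (ya @ yr) + Sg g d2 (drop i xs) (drop (i + T) (ya @ yr)))) =
        piQ (ya ! 0) * pprod Q d1 ya * exp (Sg g d1 xs ya) *
         (\<Sum>yr\<in>lenset (gp + d2 + 1). Q (ya ! d1) (yr ! 0) * pprod Q (gp + d2) yr * H (drop gp yr))"
      unfolding sum_distrib_left
    proof (intro sum.cong refl)
      fix yr :: "'e list" assume yr: "yr \<in> lenset (gp + d2 + 1)"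
      have "pprod Q N (ya @ yr) = pprod Q d1 ya * Q (ya ! d1) (yr ! 0) * pprod Q (gp + d2) yr"
        by (rule pprod_append') (use ya yr SN in auto)
      moreover have "Sg g d1 xs (ya @ yr) = Sg g d1 xs ya"
        by (rule Sg_cong) (use ya in \<open>auto simp: nth_append\<close>)
      moreover have "drop (i + T) (ya @ yr) = drop gp yr"
        using ya gap unfolding gp_def by simp
      moreover have "(ya @ yr) ! 0 = ya ! 0" using ya by (simp add: nth_append)
      ultimately show "piQ ((ya @ yr) ! 0) * pprod Q N (ya @ yr) *
          exp (Sg g d1 xs (ya @ yr) + Sg g d2 (drop i xs) (drop (i + T) (ya @ yr))) =
        piQ (ya ! 0) * pprod Q d1 ya * exp (Sg g d1 xs ya) *
         (Q (ya ! d1) (yr ! 0) * pprod Q (gp + d2) yr * H (drop gp yr))"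
        unfolding H_def exp_add by (simp add: mult_ac)
    qed
  qed
  also have "\<dots> \<le> (\<Sum>ya\<in>lenset (d1 + 1). pprod Q d1 ya * exp (Sg g d1 xs ya) * V2)"
  proof (intro sum_mono)
    fix ya
    have a: "0 \<le> pprod Q d1 ya * exp (Sg g d1 xs ya)" using pprod_nonneg[OF Q0] by simp
    have b: "0 \<le> (\<Sum>yr\<in>lenset (gp + d2 + 1). Q (ya ! d1) (yr ! 0) * pprod Q (gp + d2) yr * H (drop gp yr))"
      using Q0 pprod_nonneg[OF Q0] by (intro sum_nonneg) (simp add: H_def)
    have "piQ (ya ! 0) * (pprod Q d1 ya * exp (Sg g d1 xs ya)) *
         (\<Sum>yr\<in>lenset (gp + d2 + 1). Q (ya ! d1) (yr ! 0) * pprod Q (gp + d2) yr * H (drop gp yr))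
       \<le> 1 * (pprod Q d1 ya * exp (Sg g d1 xs ya)) * V2"
      using a b inner[of ya] pQle[of "ya ! 0"] pQ0 pprod_nonneg[OF Q0, of d1 ya]
      by (intro mult_mono) (auto intro: mult_nonneg_nonneg)
    then show "piQ (ya ! 0) * pprod Q d1 ya * exp (Sg g d1 xs ya) *
         (\<Sum>yr\<in>lenset (gp + d2 + 1). Q (ya ! d1) (yr ! 0) * pprod Q (gp + d2) yr * H (drop gp yr))
       \<le> pprod Q d1 ya * exp (Sg g d1 xs ya) * V2" by (simp add: mult_ac)
  qed
  also have "\<dots> = Vw Q g d1 xs * V2"
    unfolding Vw_def sum_distrib_right by simp
  finally show ?thesis unfolding V2_def .
qed


lemma amgm: fixes t x y :: real assumes t: "t > 0" shows "x * y \<le> (t * x\<^sup>2 + y\<^sup>2 / t) / 2"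
proof -
  have "t * x\<^sup>2 + y\<^sup>2 / t - 2 * (x * y) = (t * x - y)\<^sup>2 / t"
    using t by (simp add: field_simps power2_eq_square)
  moreover have "(t * x - y)\<^sup>2 / t \<ge> 0" using t by simp
  ultimately have "2 * (x * y) \<le> t * x\<^sup>2 + y\<^sup>2 / t" by linarith
  then have "(2 * (x * y)) / 2 \<le> (t * x\<^sup>2 + y\<^sup>2 / t) / 2" by (rule divide_right_mono) simp
  then show ?thesis by simp
qed

lemma pow_exp_ln: "r > 0 \<Longrightarrow> r ^ n = exp (real n * ln r)"
  by (simp add: exp_ln ln_realpow[symmetric])

lemma X_part:
  fixes P Q :: "('e::finite) mtx"
  assumes stP: "stochastic P" and stQ: "stochastic Q" and pP: "invariant_prob P piP"
    and Cb: "\<forall>n a b. mpow (Phi1 P Q g) n a b \<le> C * r ^ n" and r: "r > 0"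
    and N: "N = i + T + d2" and gap: "d1 + 1 \<le> i + T"
  shows "(\<Sum>xs\<in>lenset (Suc N). piP (xs ! 0) * pprod P N xs * (Vw Q g d1 xs * Vw Q g d2 (drop i xs)))
     \<le> real (CARD('e \<times> 'e \<times> 'e))^2 * C * exp ((real d1 + real d2) / 2 * ln r)"
proof -
  define C' where "C' = real (CARD('e \<times> 'e \<times> 'e))^2 * C"
  have P0: "\<forall>i j. P i j \<ge> 0" using stP unfolding stochastic_def by auto
  have pP0: "\<forall>x. piP x \<ge> 0" and pP1: "(\<Sum>x\<in>UNIV. piP x) = 1" using pP unfolding invariant_prob_def by auto
  have pPle: "piP x \<le> 1" for x
    using member_le_sum[of x UNIV piP] pP0 pP1 by simp
  define W where "W xs = piP (xs ! 0) * pprod P N xs" for xs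
  have W0: "W xs \<ge> 0" for xs unfolding W_def using pP0 pprod_nonneg[OF P0] by simp
  define V1 where "V1 xs = Vw Q g d1 xs" for xs
  define V2 where "V2 xs = Vw Q g d2 (drop i xs)" for xs
  define M1 where "M1 = N - d1"
  have SN1: "Suc N = d1 + 1 + M1" and NM1: "N = d1 + M1" unfolding M1_def N using gap by auto
  have E1: "(\<Sum>xs\<in>lenset (Suc N). W xs * (V1 xs)\<^sup>2) \<le> C' * r ^ d1"
  proof -
    have "(\<Sum>xs\<in>lenset (Suc N). W xs * (V1 xs)\<^sup>2)
        = (\<Sum>xs\<in>lenset (d1 + 1 + M1). piP (xs ! 0) * pprod P (d1 + M1) xs * (\<lambda>l. (Vw Q g d1 l)\<^sup>2) (take (d1 + 1) xs))"
    proof (unfold SN1, intro sum.cong refl)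
      fix xs :: "'e list" assume xs: "xs \<in> lenset (d1 + 1 + M1)"
      have "Vw Q g d1 xs = Vw Q g d1 (take (d1 + 1) xs)"
        by (rule Vw_cong) (use xs in auto)
      then show "W xs * (V1 xs)\<^sup>2 = piP (xs ! 0) * pprod P (d1 + M1) xs * (\<lambda>l. (Vw Q g d1 l)\<^sup>2) (take (d1 + 1) xs)"
        unfolding W_def V1_def NM1 by simp
    qed
    also have "\<dots> = (\<Sum>xa\<in>lenset (d1 + 1). piP (xa ! 0) * pprod P d1 xa * (Vw Q g d1 xa)\<^sup>2)"
      by (rule tail_drop[OF stP])
    also have "\<dots> \<le> (\<Sum>xa\<in>lenset (d1 + 1). pprod P d1 xa * (Vw Q g d1 xa)\<^sup>2)"
    proof (rule sum_mono)
      fix xa :: "'e list"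
      have "0 \<le> pprod P d1 xa * (Vw Q g d1 xa)\<^sup>2" using pprod_nonneg[OF P0] by simp
      then show "piP (xa ! 0) * pprod P d1 xa * (Vw Q g d1 xa)\<^sup>2 \<le> pprod P d1 xa * (Vw Q g d1 xa)\<^sup>2"
        using pPle[of "xa ! 0"] pP0 by (simp add: mult.assoc mult_left_le_one_le)
    qed
    also have "\<dots> \<le> C' * r ^ d1" unfolding C'_def using Z_bound[OF Cb, of d1] by simp
    finally show ?thesis .
  qed
  have SN2: "Suc N = (i + d2) + 1 + T" and NM2: "N = (i + d2) + T" unfolding N by auto
  have E2: "(\<Sum>xs\<in>lenset (Suc N). W xs * (V2 xs)\<^sup>2) \<le> C' * r ^ d2"
  proof -
    have "(\<Sum>xs\<in>lenset (Suc N). W xs * (V2 xs)\<^sup>2)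
        = (\<Sum>xs\<in>lenset ((i + d2) + 1 + T). piP (xs ! 0) * pprod P ((i + d2) + T) xs * (\<lambda>l. (Vw Q g d2 (drop i l))\<^sup>2) (take ((i + d2) + 1) xs))"
    proof (unfold SN2, intro sum.cong refl)
      fix xs :: "'e list" assume xs: "xs \<in> lenset ((i + d2) + 1 + T)"
      have "Vw Q g d2 (drop i xs) = Vw Q g d2 (drop i (take ((i + d2) + 1) xs))"
        by (rule Vw_cong) (use xs in auto)
      then show "W xs * (V2 xs)\<^sup>2 = piP (xs ! 0) * pprod P ((i + d2) + T) xs * (\<lambda>l. (Vw Q g d2 (drop i l))\<^sup>2) (take ((i + d2) + 1) xs)"
        unfolding W_def V2_def NM2 by simp
    qed
    also have "\<dots> = (\<Sum>xa\<in>lenset ((i + d2) + 1). piP (xa ! 0) * pprod P (i + d2) xa * (Vw Q g d2 (drop i xa))\<^sup>2)"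
      by (rule tail_drop[OF stP])
    also have "\<dots> \<le> (\<Sum>xb\<in>lenset (d2 + 1). pprod P d2 xb * (Vw Q g d2 xb)\<^sup>2)"
      by (rule head_drop[OF stP]) (use pP0 pP1 in auto)
    also have "\<dots> \<le> C' * r ^ d2" unfolding C'_def using Z_bound[OF Cb, of d2] by simp
    finally show ?thesis .
  qed
  define a where "a = ln r"
  define t where "t = exp ((real d2 - real d1) / 2 * a)"
  have t: "t > 0" unfolding t_def by simp
  have "(\<Sum>xs\<in>lenset (Suc N). piP (xs ! 0) * pprod P N xs * (Vw Q g d1 xs * Vw Q g d2 (drop i xs)))
      = (\<Sum>xs\<in>lenset (Suc N). W xs * (V1 xs * V2 xs))" unfolding W_def V1_def V2_def ..
  also have "\<dots> \<le> (\<Sum>xs\<in>lenset (Suc N). W xs * ((t * (V1 xs)\<^sup>2 + (V2 xs)\<^sup>2 / t) / 2))"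
    using W0 amgm[OF t] by (intro sum_mono mult_left_mono) auto
  also have "\<dots> = (t * (\<Sum>xs\<in>lenset (Suc N). W xs * (V1 xs)\<^sup>2) + (\<Sum>xs\<in>lenset (Suc N). W xs * (V2 xs)\<^sup>2) / t) / 2"
  proof -
    have "(\<Sum>xs\<in>lenset (Suc N). W xs * ((t * (V1 xs)\<^sup>2 + (V2 xs)\<^sup>2 / t) / 2))
        = (\<Sum>xs\<in>lenset (Suc N). (t * (W xs * (V1 xs)\<^sup>2) + (W xs * (V2 xs)\<^sup>2) / t) / 2)"
      by (intro sum.cong refl) (simp add: algebra_simps add_divide_distrib)
    also have "\<dots> = (\<Sum>xs\<in>lenset (Suc N). t * (W xs * (V1 xs)\<^sup>2) + (W xs * (V2 xs)\<^sup>2) / t) / 2"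
      by (rule sum_divide_distrib[symmetric])
    also have "(\<Sum>xs\<in>lenset (Suc N). t * (W xs * (V1 xs)\<^sup>2) + (W xs * (V2 xs)\<^sup>2) / t)
        = t * (\<Sum>xs\<in>lenset (Suc N). W xs * (V1 xs)\<^sup>2) + (\<Sum>xs\<in>lenset (Suc N). W xs * (V2 xs)\<^sup>2) / t"
      by (simp add: sum.distrib sum_distrib_left sum_divide_distrib)
    finally show ?thesis .
  qed
  also have "\<dots> \<le> (t * (C' * r ^ d1) + (C' * r ^ d2) / t) / 2"
    using E1 E2 t by (intro divide_right_mono add_mono mult_left_mono) auto
  also have "t * (C' * r ^ d1) = C' * exp ((real d1 + real d2) / 2 * a)"
    unfolding t_def pow_exp_ln[OF r] a_def by (simp add: exp_add[symmetric] field_simps)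
  also have "(C' * r ^ d2) / t = C' * exp ((real d1 + real d2) / 2 * a)"
  proof -
    have "exp (real d2 * a) = exp ((real d2 - real d1) / 2 * a) * exp ((real d1 + real d2) / 2 * a)"
      unfolding exp_add[symmetric] by (rule arg_cong[where f=exp]) (simp add: field_simps)
    then show ?thesis unfolding t_def pow_exp_ln[OF r] a_def[symmetric] by simp
  qed
  finally show ?thesis unfolding C'_def a_def by (simp only: mult_ac add_divide_distrib)
qed

lemma chain_bound:
  fixes P Q :: "('e::finite) mtx"
  assumes stP: "stochastic P" and stQ: "stochastic Q" and pP: "invariant_prob P piP" and pQ: "invariant_prob Q piQ"
    and Cb: "\<forall>n a b. mpow (Phi1 P Q g) n a b \<le> C * r ^ n" and r: "r > 0"
    and N: "N = i + T + d2" and gap: "d1 + 1 \<le> i + T"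
    and ev: "\<And>xs ys. length xs = Suc N \<Longrightarrow> length ys = Suc N \<Longrightarrow> A (nth xs) (nth ys) \<Longrightarrow>
               c \<le> Sg g d1 xs ys + Sg g d2 (drop i xs) (drop (i + T) ys)"
  shows "chain_prob piP P piQ Q N A
     \<le> exp (- c) * (real (CARD('e \<times> 'e \<times> 'e))^2 * C * exp ((real d1 + real d2) / 2 * ln r))"
proof -
  have P0: "\<forall>i j. P i j \<ge> 0" using stP unfolding stochastic_def by auto
  have Q0: "\<forall>i j. Q i j \<ge> 0" using stQ unfolding stochastic_def by auto
  have pP0: "\<forall>x. piP x \<ge> 0" using pP unfolding invariant_prob_def by auto
  have pQ0: "\<forall>x. piQ x \<ge> 0" using pQ unfolding invariant_prob_def by auto
  define S where "S xs ys = Sg g d1 xs ys + Sg g d2 (drop i xs) (drop (i + T) ys)" for xs ys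
  have ind: "(if A (nth xs) (nth ys) then 1 else 0) \<le> exp (S xs ys - c)"
    if "length xs = Suc N" "length ys = Suc N" for xs ys
    using ev[OF that] unfolding S_def by auto
  have "chain_prob piP P piQ Q N A =
      (\<Sum>xs\<in>lenset (Suc N). \<Sum>ys\<in>lenset (Suc N). (piP (xs ! 0) * pprod P N xs) * (piQ (ys ! 0) * pprod Q N ys)
          * (if A (nth xs) (nth ys) then 1 else 0))"
    unfolding chain_prob_def path_weight_def pprod_def ..
  also have "\<dots> \<le> (\<Sum>xs\<in>lenset (Suc N). \<Sum>ys\<in>lenset (Suc N). (piP (xs ! 0) * pprod P N xs) * (piQ (ys ! 0) * pprod Q N ys)
          * exp (S xs ys - c))"
    using ind pP0 pQ0 pprod_nonneg[OF P0] pprod_nonneg[OF Q0]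
    by (intro sum_mono mult_left_mono) (auto intro: mult_nonneg_nonneg)
  also have "\<dots> = exp (- c) * (\<Sum>xs\<in>lenset (Suc N). piP (xs ! 0) * pprod P N xs *
         (\<Sum>ys\<in>lenset (Suc N). piQ (ys ! 0) * pprod Q N ys * exp (S xs ys)))"
    by (simp add: sum_distrib_left exp_diff exp_minus field_simps)
  also have "\<dots> \<le> exp (- c) * (\<Sum>xs\<in>lenset (Suc N). piP (xs ! 0) * pprod P N xs *
         (Vw Q g d1 xs * Vw Q g d2 (drop i xs)))"
    unfolding S_def
    using Y_decouple[OF stQ pQ _ N] gap pP0 pprod_nonneg[OF P0]
    by (intro mult_left_mono sum_mono) (auto intro: mult_nonneg_nonneg)
  also have "\<dots> \<le> exp (- c) * (real (CARD('e \<times> 'e \<times> 'e))^2 * C * exp ((real d1 + real d2) / 2 * ln r))"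
    by (intro mult_left_mono X_part[OF stP stQ pP Cb r N gap]) simp
  finally show ?thesis .
qed


lemma sum_UNIV_prod: "(\<Sum>p\<in>(UNIV::('a::finite \<times> 'b::finite) set). F p) = (\<Sum>a\<in>UNIV. \<Sum>b\<in>UNIV. F (a, b))"
  by (metis UNIV_Times_UNIV sum.cartesian_product')

lemma sum_indicator_eq: "(\<Sum>v\<in>(UNIV::('a::finite) set). (if a = v then 1 else 0) * h v) = (h a :: real)"
proof -
  have "(\<Sum>v\<in>(UNIV::'a set). (if a = v then 1 else 0) * h v) = (\<Sum>v\<in>(UNIV::'a set). if a = v then h v else 0)"
    by (rule sum.cong) auto
  then show ?thesis by simp
qed

lemma emp_integ:
  fixes X Y :: "nat \<Rightarrow> 'e::finite"
  shows "real d * integ (emp X Y i j d) h = (\<Sum>k<d. h ((X (i+k), Y (j+k)), (X (Suc (i+k)), Y (Suc (j+k)))))"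
proof (cases "d = 0")
  case True
  then show ?thesis by (simp add: emp_def integ_def)
next
  case False
  define w where "w k = ((X (i+k-1), Y (j+k-1)), (X (i+k), Y (j+k)))" for k
  have "integ (emp X Y i j d) h = (\<Sum>v\<in>UNIV. (1 / real d) * (\<Sum>k=1..d. (if w k = v then 1 else 0) * h v))"
    unfolding integ_def emp_def w_def by (simp add: sum_distrib_right mult.assoc)
  also have "\<dots> = (1 / real d) * (\<Sum>k=1..d. \<Sum>v\<in>UNIV. (if w k = v then 1 else 0) * h v)"
    by (simp add: sum_distrib_left[symmetric] sum.swap[of _ UNIV] sum_divide_distrib)
  also have "\<dots> = (1 / real d) * (\<Sum>k=1..d. h (w k))"
    by (simp add: sum_indicator_eq)
  finally have "real d * integ (emp X Y i j d) h = (\<Sum>k=1..d. h (w k))" using False by simp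
  also have "\<dots> = (\<Sum>k<d. h (w (Suc k)))" by (simp add: sum.atLeast1_atMost_eq)
  finally show ?thesis unfolding w_def by simp
qed

lemma integ_diff_bound:
  fixes e q h :: "'a::finite \<Rightarrow> real"
  assumes "\<forall>v. \<bar>h v\<bar> \<le> G"
  shows "\<bar>integ e h - integ q h\<bar> \<le> 2 * G * tv_dist e q"
proof -
  have "\<bar>integ e h - integ q h\<bar> = \<bar>\<Sum>v\<in>UNIV. (e v - q v) * h v\<bar>"
    unfolding integ_def by (simp add: sum_subtractf left_diff_distrib)
  also have "\<dots> \<le> (\<Sum>v\<in>UNIV. \<bar>(e v - q v) * h v\<bar>)" by (rule sum_abs)
  also have "\<dots> \<le> (\<Sum>v\<in>UNIV. \<bar>e v - q v\<bar> * G)"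
    using assms by (intro sum_mono) (simp add: abs_mult mult_left_mono)
  also have "\<dots> = 2 * G * tv_dist e q" unfolding tv_dist_def by (simp add: sum_distrib_left mult.commute)
  finally show ?thesis .
qed

lemma pihat_f:
  fixes P Q :: "('e::finite) mtx"
  assumes inv: "invariant_prob (Rstar P Q f \<theta> r) ps"
  shows "integ (pihat P Q f \<theta> r ps) (\<lambda>(_, u'). of_int (f u')) = integ ps (\<lambda>u. of_int (f u))"
proof -
  have I: "(\<Sum>u\<in>UNIV. ps u * Rstar P Q f \<theta> r u u') = ps u'" for u'
    using inv unfolding invariant_prob_def by blast
  have "integ (pihat P Q f \<theta> r ps) (\<lambda>(_, u'). of_int (f u'))
      = (\<Sum>u\<in>UNIV. \<Sum>u'\<in>UNIV. ps u * Rstar P Q f \<theta> r u u' * of_int (f u'))"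
    unfolding integ_def pihat_def by (subst sum_UNIV_prod) simp
  also have "\<dots> = (\<Sum>u'\<in>UNIV. (\<Sum>u\<in>UNIV. ps u * Rstar P Q f \<theta> r u u') * of_int (f u'))"
    by (subst sum.swap) (simp add: sum_distrib_right)
  also have "\<dots> = integ ps (\<lambda>u. of_int (f u))" unfolding integ_def I ..
  finally show ?thesis .
qed

lemma Phi1_nonneg:
  assumes "stochastic P" "stochastic Q"
  shows "\<forall>u u'. Phi1 P Q g u u' \<ge> 0"
  using assms unfolding stochastic_def Phi1_def by (auto intro!: mult_nonneg_nonneg)

lemma Phi1_rowsum:
  fixes P Q :: "('e::finite) mtx"
  assumes stP: "stochastic P" and stQ: "stochastic Q" and G: "\<forall>v. \<bar>g v\<bar> \<le> G"
  shows "\<forall>u. (\<Sum>u'\<in>UNIV. Phi1 P Q g u u') \<ge> exp (- 2 * G)"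
proof
  fix u :: "'e \<times> 'e \<times> 'e"
  obtain x y z where u: "u = (x, y, z)" by (cases u) auto
  have P0: "\<forall>i j. P i j \<ge> 0" and P1: "\<forall>x. (\<Sum>y\<in>UNIV. P x y) = 1" using stP unfolding stochastic_def by auto
  have Q0: "\<forall>i j. Q i j \<ge> 0" and Q1: "\<forall>x. (\<Sum>y\<in>UNIV. Q x y) = 1" using stQ unfolding stochastic_def by auto
  have le: "exp (- 2 * G) * (P x x' * Q y y' * Q z z') \<le> Phi1 P Q g (x, y, z) (x', y', z')" for x' y' z'
  proof -
    have "- 2 * G \<le> g ((x, y), (x', y')) + g ((x, z), (x', z'))"
      using G[rule_format, of "((x, y), (x', y'))"] G[rule_format, of "((x, z), (x', z'))"] by linarith
    then have "exp (- 2 * G) \<le> exp (g ((x, y), (x', y')) + g ((x, z), (x', z')))" by simp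
    then show ?thesis unfolding Phi1_def using P0 Q0
      by (simp add: mult.assoc mult_right_mono)
  qed
  have "exp (- 2 * G) = (\<Sum>x'\<in>UNIV. \<Sum>y'\<in>UNIV. \<Sum>z'\<in>UNIV. exp (- 2 * G) * (P x x' * Q y y' * Q z z'))"
    by (simp add: sum_distrib_left[symmetric] sum_distrib_right[symmetric] P1 Q1 mult.assoc)
  also have "\<dots> \<le> (\<Sum>x'\<in>UNIV. \<Sum>y'\<in>UNIV. \<Sum>z'\<in>UNIV. Phi1 P Q g (x, y, z) (x', y', z'))"
    using le by (intro sum_mono) auto
  also have "\<dots> = (\<Sum>u'\<in>UNIV. Phi1 P Q g u u')"
    unfolding u by (simp add: sum_UNIV_prod)
  finally show "(\<Sum>u'\<in>UNIV. Phi1 P Q g u u') \<ge> exp (- 2 * G)" .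
qed

theorem corollary5p4:
  fixes P Q :: "('e::finite) mtx" and piP piQ :: "'e \<Rightarrow> real"
    and f :: "'e \<times> 'e \<Rightarrow> int"
    and \<theta>s :: real and r ps :: "'e \<times> 'e \<Rightarrow> real"
  assumes "stochastic P" "irreducible_mtx P" "aperiodic_mtx P"
    and "stochastic Q" "irreducible_mtx Q" "aperiodic_mtx Q"
    and "invariant_prob P piP" "invariant_prob Q piQ"
    and "Gcd (range f) = 1"
    and "(\<Sum>x\<in>UNIV. \<Sum>y\<in>UNIV. piP x * piQ y * of_int (f (x,y))) < 0"
    and C1: "\<exists>n\<ge>1. \<exists>xs ys :: nat \<Rightarrow> 'e.
              (\<forall>k<n. P (xs k) (xs ((k+1) mod n)) > 0 \<and> Q (ys k) (ys ((k+1) mod n)) > 0)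
              \<and> (\<Sum>k<n. f (xs k, ys k)) > 0"
    and "\<theta>s > 0" and "spec_rad (Phi P Q f \<theta>s) = 1"
    and "\<forall>u. r u > 0"
    and "\<forall>u. (\<Sum>u'\<in>UNIV. Phi P Q f \<theta>s u u' * r u') = r u"
    and "invariant_prob (Rstar P Q f \<theta>s r) ps"
    and "2 * J1 P Q (pihat P Q f \<theta>s r ps) > ereal (3 * \<theta>s * integ ps (\<lambda>u. of_int (f u)))"
  shows "\<exists>\<epsilon> \<eta> K. \<epsilon> > 0 \<and> \<eta> > 0 \<and> K > 0 \<and>
    (\<forall>(s::real) (i::nat) (\<delta>1::nat) (\<delta>2::nat) (T::nat).
       s > 0 \<and> T \<ge> 1 \<and> i \<le> \<delta>1 \<and> \<delta>2 \<ge> \<delta>1 - i \<and> i + T \<ge> \<delta>1 + 1 \<longrightarrow>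
       chain_prob piP P piQ Q (max \<delta>1 (i + T + \<delta>2))
         (\<lambda>X Y. real \<delta>1 * integ (emp X Y 0 0 \<delta>1) (\<lambda>(_, u'). of_int (f u')) > s
              \<and> tv_dist (emp X Y 0 0 \<delta>1) (pihat P Q f \<theta>s r ps) < \<eta>
              \<and> real \<delta>2 * integ (emp X Y i (i + T) \<delta>2) (\<lambda>(_, u'). of_int (f u')) > s
              \<and> tv_dist (emp X Y i (i + T) \<delta>2) (pihat P Q f \<theta>s r ps) < \<eta>)
       \<le> K * exp (- (3 * \<theta>s / 2 + \<epsilon>) * s))"
proof -
  have stP: "stochastic P" and stQ: "stochastic Q" and pP: "invariant_prob P piP"
    and pQ: "invariant_prob Q piQ" and th: "\<theta>s > 0" and invR: "invariant_prob (Rstar P Q f \<theta>s r) ps"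
    and J: "2 * J1 P Q (pihat P Q f \<theta>s r ps) > ereal (3 * \<theta>s * integ ps (\<lambda>u. of_int (f u)))"
    using assms by auto
  define ph where "ph = pihat P Q f \<theta>s r ps"
  define m where "m = integ ps (\<lambda>u. of_int (f u))"
  define fx :: "('e \<times> 'e) \<times> ('e \<times> 'e) \<Rightarrow> real" where "fx = (\<lambda>(_, u'). of_int (f u'))"
  have phf: "integ ph fx = m" unfolding ph_def fx_def m_def by (rule pihat_f[OF invR])
  have J': "ereal (3 * \<theta>s * m / 2) < J1 P Q ph"
  proof (cases "J1 P Q ph")
    case (real x)
    then show ?thesis using J unfolding ph_def m_def by simp
  next
    case PInf
    then show ?thesis by simp
  next
    case MInf
    then show ?thesis using J unfolding ph_def m_def by simp
  qed
  then obtain g where gJ: "3 * \<theta>s * m / 2 < 2 * (\<Sum>v\<in>UNIV. ph v * g v) - ln (spec_rad (Phi1 P Q g))"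
    unfolding J1_def less_SUP_iff by auto
  define G where "G = (\<Sum>v\<in>UNIV. \<bar>g v\<bar>)"
  have Gb: "\<forall>v. \<bar>g v\<bar> \<le> G" unfolding G_def by (auto intro: member_le_sum)
  have G0: "G \<ge> 0" unfolding G_def by (simp add: sum_nonneg)
  define F where "F = (\<Sum>u\<in>UNIV. \<bar>real_of_int (f u)\<bar>)"
  have Fb: "\<forall>p. \<bar>fx p\<bar> \<le> F"
  proof
    fix p :: "('e \<times> 'e) \<times> ('e \<times> 'e)"
    obtain u u' where p: "p = (u, u')" by (cases p) auto
    show "\<bar>fx p\<bar> \<le> F" unfolding p fx_def F_def
      by (simp add: member_le_sum[of u' UNIV "\<lambda>u. \<bar>real_of_int (f u)\<bar>"])
  qed
  have F0: "F \<ge> 0" unfolding F_def by (simp add: sum_nonneg)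
  define \<rho> where "\<rho> = spec_rad (Phi1 P Q g)"
  have "\<rho> \<ge> exp (- 2 * G)" unfolding \<rho>_def
    by (rule spec_rad_ge[OF Phi1_nonneg[OF stP stQ] Phi1_rowsum[OF stP stQ Gb]]) simp
  then have \<rho>0: "\<rho> > 0" using exp_gt_zero[of "- 2 * G"] by linarith
  define pg where "pg = (\<Sum>v\<in>UNIV. ph v * g v)"
  have pgI: "integ ph g = pg" unfolding integ_def pg_def ..
  define \<gamma> where "\<gamma> = (2 * pg - ln \<rho> - 3 * \<theta>s * m / 2) / 4"
  have \<gamma>0: "\<gamma> > 0" using gJ unfolding \<gamma>_def pg_def \<rho>_def by simp
  have pgeq: "2 * pg - ln \<rho> = 3 * \<theta>s * m / 2 + 4 * \<gamma>" unfolding \<gamma>_def by (simp add: field_simps)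
  define rr where "rr = \<rho> * exp \<gamma>"
  have rr0: "rr > 0" unfolding rr_def using \<rho>0 by simp
  have rrgt: "\<rho> < rr" unfolding rr_def using \<rho>0 \<gamma>0 by simp
  have lnrr: "ln rr = ln \<rho> + \<gamma>" unfolding rr_def using \<rho>0 by (simp add: ln_mult)
  obtain C where C: "\<forall>k a b. \<bar>mpow (Phi1 P Q g) k a b\<bar> \<le> C * rr ^ k"
    using gelfand[of "Phi1 P Q g" rr] rrgt unfolding \<rho>_def by blast
  have Cb: "\<forall>n a b. mpow (Phi1 P Q g) n a b \<le> C * rr ^ n"
    using C by (meson abs_le_D1)
  define \<eta> where "\<eta> = \<gamma> / (4 * G + 3 * \<theta>s * F + 1)"
  have "0 \<le> \<theta>s * F" using th F0 by simp
  then have den0: "4 * G + 3 * \<theta>s * F + 1 > 0" using G0 by linarith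
  have \<eta>0: "\<eta> > 0" unfolding \<eta>_def using \<gamma>0 den0 by simp
  have \<eta>eq: "\<eta> * (4 * G + 3 * \<theta>s * F + 1) = \<gamma>" unfolding \<eta>_def using den0 by simp
  have \<eta>G: "4 * \<eta> * G \<le> \<gamma>"
  proof -
    have "0 \<le> \<eta> * (3 * \<theta>s * F) + \<eta>" using \<eta>0 th F0 by simp
    then show ?thesis using \<eta>eq by (simp add: algebra_simps)
  qed
  have \<eta>F: "3 * \<theta>s * \<eta> * F \<le> \<gamma>"
  proof -
    have "0 \<le> \<eta> * (4 * G) + \<eta>" using \<eta>0 G0 by simp
    then show ?thesis using \<eta>eq by (simp add: algebra_simps)
  qed
  define \<epsilon> where "\<epsilon> = \<gamma> / (\<bar>m\<bar> + 2 * \<eta> * F + 1)"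
  have "0 \<le> \<eta> * F" using \<eta>0 F0 by simp
  then have den1: "\<bar>m\<bar> + 2 * \<eta> * F + 1 > 0" by linarith
  have \<epsilon>0: "\<epsilon> > 0" unfolding \<epsilon>_def using \<gamma>0 den1 by simp
  define C' where "C' = real (CARD('e \<times> 'e \<times> 'e))^2 * C"
  define K where "K = \<bar>C'\<bar> + 1"
  have K0: "K > 0" unfolding K_def by simp
  have C'K: "C' \<le> K" unfolding K_def by simp
  have main: "\<forall>(s::real) (i::nat) (\<delta>1::nat) (\<delta>2::nat) (T::nat).
       s > 0 \<and> T \<ge> 1 \<and> i \<le> \<delta>1 \<and> \<delta>2 \<ge> \<delta>1 - i \<and> i + T \<ge> \<delta>1 + 1 \<longrightarrow>
       chain_prob piP P piQ Q (max \<delta>1 (i + T + \<delta>2))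
         (\<lambda>X Y. real \<delta>1 * integ (emp X Y 0 0 \<delta>1) fx > s
              \<and> tv_dist (emp X Y 0 0 \<delta>1) ph < \<eta>
              \<and> real \<delta>2 * integ (emp X Y i (i + T) \<delta>2) fx > s
              \<and> tv_dist (emp X Y i (i + T) \<delta>2) ph < \<eta>)
       \<le> K * exp (- (3 * \<theta>s / 2 + \<epsilon>) * s)"
  proof (intro allI impI)
    fix s :: real and i d1 d2 T :: nat
    assume cond: "s > 0 \<and> T \<ge> 1 \<and> i \<le> d1 \<and> d2 \<ge> d1 - i \<and> i + T \<ge> d1 + 1"
    then have s0: "s > 0" and gap: "d1 + 1 \<le> i + T" by auto
    define N where "N = i + T + d2"
    have NN: "max d1 (i + T + d2) = N" unfolding N_def using gap by simp
    define A where "A = (\<lambda>X Y. real d1 * integ (emp X Y 0 0 d1) fx > s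
              \<and> tv_dist (emp X Y 0 0 d1) ph < \<eta>
              \<and> real d2 * integ (emp X Y i (i + T) d2) fx > s
              \<and> tv_dist (emp X Y i (i + T) d2) ph < \<eta>)"
    have expos: "0 \<le> K * exp (- (3 * \<theta>s / 2 + \<epsilon>) * s)" using K0 by simp
    have key: "chain_prob piP P piQ Q N A \<le> K * exp (- (3 * \<theta>s / 2 + \<epsilon>) * s)"
    proof (cases "\<exists>xs ys. length xs = Suc N \<and> length ys = Suc N \<and> A (nth xs) (nth ys)")
      case False
      have "chain_prob piP P piQ Q N A = 0"
        unfolding chain_prob_def using False by (intro sum.neutral ballI) auto
      then show ?thesis using expos by simp
    next
      case True
      then obtain xs0 ys0 where A0: "A (nth xs0) (nth ys0)" by blast
      define D where "D = m + 2 * \<eta> * F"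
      have fxb: "integ (emp X Y j j' d) fx \<le> D" if "tv_dist (emp X Y j j' d) ph < \<eta>" for X Y j j' d
      proof -
        have "\<bar>integ (emp X Y j j' d) fx - integ ph fx\<bar> \<le> 2 * F * tv_dist (emp X Y j j' d) ph"
          by (rule integ_diff_bound[OF Fb])
        also have "\<dots> \<le> 2 * F * \<eta>" using that F0 by (intro mult_left_mono) auto
        finally show ?thesis unfolding D_def phf by (simp add: algebra_simps)
      qed
      have sd1: "s < real d1 * D"
      proof -
        have "s < real d1 * integ (emp (nth xs0) (nth ys0) 0 0 d1) fx" using A0 unfolding A_def by blast
        also have "\<dots> \<le> real d1 * D" using fxb A0 unfolding A_def by (intro mult_left_mono) auto
        finally show ?thesis .
      qed
      have sd2: "s < real d2 * D"
      proof -
        have "s < real d2 * integ (emp (nth xs0) (nth ys0) i (i + T) d2) fx" using A0 unfolding A_def by blast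
        also have "\<dots> \<le> real d2 * D" using fxb A0 unfolding A_def by (intro mult_left_mono) auto
        finally show ?thesis .
      qed
      have D0: "D > 0"
      proof (rule ccontr)
        assume "\<not> D > 0"
        then have "real d1 * D \<le> 0" by (simp add: mult_nonneg_nonpos)
        with sd1 s0 show False by linarith
      qed
      have sD1: "s / D < real d1" using sd1 D0 by (simp add: pos_divide_less_eq)
      have sD2: "s / D < real d2" using sd2 D0 by (simp add: pos_divide_less_eq)
      define c where "c = real d1 * (pg - 2 * \<eta> * G) + real d2 * (pg - 2 * \<eta> * G)"
      have gb: "integ (emp X Y j j' d) g \<ge> pg - 2 * \<eta> * G" if "tv_dist (emp X Y j j' d) ph < \<eta>" for X Y j j' d
      proof -
        have "\<bar>integ (emp X Y j j' d) g - integ ph g\<bar> \<le> 2 * G * tv_dist (emp X Y j j' d) ph"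
          by (rule integ_diff_bound[OF Gb])
        also have "\<dots> \<le> 2 * G * \<eta>" using that G0 by (intro mult_left_mono) auto
        finally show ?thesis unfolding pgI by (simp add: algebra_simps)
      qed
      have ev: "c \<le> Sg g d1 xs ys + Sg g d2 (drop i xs) (drop (i + T) ys)"
        if lx: "length xs = Suc N" and ly: "length ys = Suc N" and Axy: "A (nth xs) (nth ys)" for xs ys
      proof -
        have S1: "Sg g d1 xs ys = real d1 * integ (emp (nth xs) (nth ys) 0 0 d1) g"
          unfolding emp_integ Sg_def by simp
        have S2: "Sg g d2 (drop i xs) (drop (i + T) ys) = real d2 * integ (emp (nth xs) (nth ys) i (i + T) d2) g"
          unfolding emp_integ Sg_def using lx ly N_def by (intro sum.cong refl) (auto simp: nth_drop)
        have "real d1 * (pg - 2 * \<eta> * G) \<le> real d1 * integ (emp (nth xs) (nth ys) 0 0 d1) g"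
          using gb Axy unfolding A_def by (intro mult_left_mono) auto
        moreover have "real d2 * (pg - 2 * \<eta> * G) \<le> real d2 * integ (emp (nth xs) (nth ys) i (i + T) d2) g"
          using gb Axy unfolding A_def by (intro mult_left_mono) auto
        ultimately show ?thesis unfolding S1 S2 c_def by linarith
      qed
      have cb: "chain_prob piP P piQ Q N A
          \<le> exp (- c) * (real (CARD('e \<times> 'e \<times> 'e))^2 * C * exp ((real d1 + real d2) / 2 * ln rr))"
        by (rule chain_bound[OF stP stQ pP pQ Cb rr0 N_def gap ev])
      define L where "L = 2 * pg - 4 * \<eta> * G - ln rr"
      have expeq: "exp (- c) * (real (CARD('e \<times> 'e \<times> 'e))^2 * C * exp ((real d1 + real d2) / 2 * ln rr))
          = C' * exp (- ((real d1 + real d2) / 2 * L))"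
      proof -
        have "- c + (real d1 + real d2) / 2 * ln rr = - ((real d1 + real d2) / 2 * L)"
          unfolding c_def L_def by (simp add: field_simps)
        then show ?thesis unfolding C'_def by (simp add: exp_add[symmetric] mult_ac)
      qed
      have L_eq: "L = 3 * \<theta>s * m / 2 + 3 * \<gamma> - 4 * \<eta> * G"
        using pgeq lnrr unfolding L_def by linarith
      have e1: "3 * \<theta>s / 2 * D = 3 * \<theta>s * m / 2 + 3 * \<theta>s * \<eta> * F / 1"
        unfolding D_def by (simp add: algebra_simps)
      have L1: "L \<ge> 3 * \<theta>s / 2 * D + \<gamma>"
        using L_eq e1 \<eta>G \<eta>F by linarith
      have \<epsilon>D: "\<epsilon> * D \<le> \<gamma>"
      proof -
        have "D \<le> \<bar>m\<bar> + 2 * \<eta> * F + 1" unfolding D_def by simp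
        then have "\<epsilon> * D \<le> \<epsilon> * (\<bar>m\<bar> + 2 * \<eta> * F + 1)" using \<epsilon>0 by (intro mult_left_mono) auto
        also have "\<dots> = \<gamma>" unfolding \<epsilon>_def using den1 by simp
        finally show ?thesis .
      qed
      have "(3 * \<theta>s / 2 + \<epsilon>) * D = 3 * \<theta>s / 2 * D + \<epsilon> * D" by (rule distrib_right)
      then have L2: "L \<ge> (3 * \<theta>s / 2 + \<epsilon>) * D" using L1 \<epsilon>D by linarith
      have "(3 * \<theta>s / 2 + \<epsilon>) * D > 0" using D0 \<epsilon>0 th by simp
      then have L0: "L \<ge> 0" using L2 by linarith
      have "s / D + s / D \<le> real d1 + real d2" using sD1 sD2 by linarith
      then have "(s / D + s / D) / 2 \<le> (real d1 + real d2) / 2" by (rule divide_right_mono) simp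
      then have avg: "s / D \<le> (real d1 + real d2) / 2" by simp
      have "(3 * \<theta>s / 2 + \<epsilon>) * s = (s / D) * ((3 * \<theta>s / 2 + \<epsilon>) * D)" using D0 by simp
      also have "\<dots> \<le> (s / D) * L" using L2 s0 D0 by (intro mult_left_mono) auto
      also have "\<dots> \<le> (real d1 + real d2) / 2 * L" using avg L0 by (intro mult_right_mono) auto
      finally have X: "(3 * \<theta>s / 2 + \<epsilon>) * s \<le> (real d1 + real d2) / 2 * L" .
      have "- (3 * \<theta>s / 2 + \<epsilon>) * s = - ((3 * \<theta>s / 2 + \<epsilon>) * s)" by (rule mult_minus_left)
      then have "- ((real d1 + real d2) / 2 * L) \<le> - (3 * \<theta>s / 2 + \<epsilon>) * s" using X by linarith
      then have ex: "exp (- ((real d1 + real d2) / 2 * L)) \<le> exp (- (3 * \<theta>s / 2 + \<epsilon>) * s)"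
        by (simp only: exp_le_cancel_iff)
      have "chain_prob piP P piQ Q N A \<le> C' * exp (- ((real d1 + real d2) / 2 * L))"
        using cb expeq by simp
      also have "\<dots> \<le> K * exp (- ((real d1 + real d2) / 2 * L))"
        using C'K by (intro mult_right_mono) auto
      also have "\<dots> \<le> K * exp (- (3 * \<theta>s / 2 + \<epsilon>) * s)"
        using ex K0 by (intro mult_left_mono) auto
      finally show ?thesis .
    qed
    then show "chain_prob piP P piQ Q (max d1 (i + T + d2))
         (\<lambda>X Y. real d1 * integ (emp X Y 0 0 d1) fx > s
              \<and> tv_dist (emp X Y 0 0 d1) ph < \<eta>
              \<and> real d2 * integ (emp X Y i (i + T) d2) fx > s
              \<and> tv_dist (emp X Y i (i + T) d2) ph < \<eta>)
       \<le> K * exp (- (3 * \<theta>s / 2 + \<epsilon>) * s)" unfolding NN A_def .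
  qed
  show ?thesis
    apply (rule exI[of _ \<epsilon>], rule exI[of _ \<eta>], rule exI[of _ K])
    using \<epsilon>0 \<eta>0 K0 main unfolding fx_def ph_def by blast
qed

end
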